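(* Let $m\ge 2$ and let $F_m$ be the free group with basis $a_1,\dots,a_m$. Define $$\Delta_{F_m}(\mathbf z)=\sum_{g\in F_m} z_1^{|g|_{a_1^{\epsilon}}}\cdots z_m^{|g|_{a_m^{\epsilon}}},\qquad \mathbf z=(z_1,\dots,z_m),$$ where $|g|_{a_i^{\epsilon}}=|g|_{a_i}+|g|_{a_i^{-1}}$ is the total number of occurrences of $a_i$ and $a_i^{-1}$ in the freely reduced word representing $g$. Then $$\Delta_{F_m}(\mathbf z)=\frac{(1+z_1)\cdots(1+z_m)}{R(\mathbf z)},\qquad R(\mathbf z)=1-\sum_{l=1}^{m}(2l-1)\sum_{1\le i_1<\dots<i_l\le m} z_{i_1}\cdots z_{i_l}.$$
   Context: Identity of formal power series in $z_1,\dots,z_m$ (equivalently, of analytic functions near $\mathbf 0$). *)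

theory Defs
  imports "HOL-Analysis.Analysis"
begin

text \<open>Elements of the free group F_m on basis a_0,...,a_{m-1} are represented by their
unique freely reduced words. A letter is a pair (i, e): i is the generator index (i < m),
e = True means a_i and e = False means a_i^{-1}.\<close>

type_synonym letter = "nat \<times> bool"

definition inverse_letter :: "letter \<Rightarrow> letter" where
  "inverse_letter l = (fst l, \<not> snd l)"

fun freely_reduced :: "letter list \<Rightarrow> bool" where
  "freely_reduced [] = True"
| "freely_reduced [x] = True"
| "freely_reduced (x # y # ys) = (y \<noteq> inverse_letter x \<and> freely_reduced (y # ys))"

definition reduced_words :: "nat \<Rightarrow> letter list set" where
  "reduced_words m = {w. (\<forall>l\<in>set w. fst l < m) \<and> freely_reduced w}"

definition letter_count :: "nat \<Rightarrow> letter list \<Rightarrow> nat" where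
  "letter_count i w = length (filter (\<lambda>l. fst l = i) w)"

definition R_poly :: "nat \<Rightarrow> (nat \<Rightarrow> complex) \<Rightarrow> complex" where
  "R_poly m z = 1 - (\<Sum>l=1..m. of_nat (2*l - 1) *
       (\<Sum>S\<in>{S. S \<subseteq> {..<m} \<and> card S = l}. \<Prod>i\<in>S. z i))"

end

theory Submission
  imports Defs
begin

lemma P_eq:
  fixes z :: "nat \<Rightarrow> complex"
  assumes "finite A"
  shows "(\<Sum>S\<in>Pow A. \<Prod>i\<in>S. z i) = (\<Prod>i\<in>A. 1 + z i)"
  using prod_add[OF assms, of z "\<lambda>_. 1"] by (simp add: add.commute)

lemma aux: "\<And>P s w::complex. 1 + w \<noteq> 0 \<Longrightarrow> (1 + w) * (P * (1 - s)) - 2 * w * P = (1 + w) * P * (1 - (2 * w / (1 + w) + s))"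
proof -
  fix P s w :: complex assume h: "1 + w \<noteq> 0"
  have "(1 + w) * P * (2 * w / (1 + w)) = 2 * w * P" using h by simp
  then show "(1 + w) * (P * (1 - s)) - 2 * w * P = (1 + w) * P * (1 - (2 * w / (1 + w) + s))"
    by (simp add: algebra_simps)
qed

lemma Q_eq:
  fixes z :: "nat \<Rightarrow> complex"
  assumes "finite A" "\<forall>i\<in>A. 1 + z i \<noteq> 0"
  shows "(\<Sum>S\<in>Pow A. (1 - 2 * of_nat (card S)) * (\<Prod>i\<in>S. z i))
     = (\<Prod>i\<in>A. 1 + z i) * (1 - (\<Sum>i\<in>A. 2 * z i / (1 + z i)))"
  using assms
proof (induction A rule: finite_induct)
  case empty
  then show ?case by simp
next
  case (insert a A)
  let ?Q = "(\<Sum>S\<in>Pow A. (1 - 2 * of_nat (card S)) * (\<Prod>i\<in>S. z i) :: complex)"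
  have inj: "inj_on (insert a) (Pow A)"
    using insert(2) by (smt (verit, ccfv_SIG) PowD inj_onI insert_ident subset_iff)
  have disj: "Pow A \<inter> insert a ` Pow A = {}" using insert(2) by auto
  have "(\<Sum>S\<in>Pow (insert a A). (1 - 2 * of_nat (card S)) * (\<Prod>i\<in>S. z i))
      = ?Q + (\<Sum>S\<in>insert a ` Pow A. (1 - 2 * of_nat (card S)) * (\<Prod>i\<in>S. z i))"
    unfolding Pow_insert using insert(1) disj by (simp add: sum.union_disjoint)
  also have "(\<Sum>S\<in>insert a ` Pow A. (1 - 2 * of_nat (card S)) * (\<Prod>i\<in>S. z i))
      = (\<Sum>S\<in>Pow A. (1 - 2 * of_nat (card (insert a S))) * (\<Prod>i\<in>insert a S. z i))"
    by (simp add: sum.reindex[OF inj])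
  also have "\<dots> = (\<Sum>S\<in>Pow A. z a * ((1 - 2 * of_nat (card S)) * (\<Prod>i\<in>S. z i)) - 2 * z a * (\<Prod>i\<in>S. z i))"
  proof (rule sum.cong)
    fix S assume "S \<in> Pow A"
    then have "a \<notin> S" "finite S" using insert(1,2) finite_subset by auto
    then show "(1 - 2 * of_nat (card (insert a S))) * (\<Prod>i\<in>insert a S. z i)
        = z a * ((1 - 2 * of_nat (card S)) * (\<Prod>i\<in>S. z i)) - 2 * z a * (\<Prod>i\<in>S. z i)"
      by (simp add: algebra_simps)
  qed simp
  also have "\<dots> = z a * ?Q - 2 * z a * (\<Prod>i\<in>A. 1 + z i)"
  proof -
    have e1: "(\<Sum>S\<in>Pow A. z a * ((1 - 2 * of_nat (card S)) * (\<Prod>i\<in>S. z i))) = z a * ?Q"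
      by (simp only: sum_distrib_left)
    have e2: "(\<Sum>S\<in>Pow A. 2 * z a * (\<Prod>i\<in>S. z i)) = 2 * z a * (\<Prod>i\<in>A. 1 + z i)"
      by (simp only: sum_distrib_left[symmetric] P_eq[OF insert(1)])
    show ?thesis by (simp only: sum_subtractf e1 e2)
  qed
  finally have H: "(\<Sum>S\<in>Pow (insert a A). (1 - 2 * of_nat (card S)) * (\<Prod>i\<in>S. z i))
     = (1 + z a) * ?Q - 2 * z a * (\<Prod>i\<in>A. 1 + z i)" by (simp add: algebra_simps)
  have Q: "?Q = (\<Prod>i\<in>A. 1 + z i) * (1 - (\<Sum>i\<in>A. 2 * z i / (1 + z i)))"
    using insert by simp
  have "(\<Sum>S\<in>Pow (insert a A). (1 - 2 * of_nat (card S)) * (\<Prod>i\<in>S. z i))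
     = (1 + z a) * ((\<Prod>i\<in>A. 1 + z i) * (1 - (\<Sum>i\<in>A. 2 * z i / (1 + z i)))) - 2 * z a * (\<Prod>i\<in>A. 1 + z i)"
    by (simp only: H Q)
  also have "\<dots> = (1 + z a) * (\<Prod>i\<in>A. 1 + z i) * (1 - (2 * z a / (1 + z a) + (\<Sum>i\<in>A. 2 * z i / (1 + z i))))"
    by (rule aux) (use insert.prems in simp)
  finally have F: "(\<Sum>S\<in>Pow (insert a A). (1 - 2 * of_nat (card S)) * (\<Prod>i\<in>S. z i))
     = (1 + z a) * (\<Prod>i\<in>A. 1 + z i) * (1 - (2 * z a / (1 + z a) + (\<Sum>i\<in>A. 2 * z i / (1 + z i))))" .
  have p: "(\<Prod>i\<in>insert a A. 1 + z i) = (1 + z a) * (\<Prod>i\<in>A. 1 + z i)"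
    using insert(1,2) by (rule prod.insert)
  have s: "(\<Sum>i\<in>insert a A. 2 * z i / (1 + z i)) = 2 * z a / (1 + z a) + (\<Sum>i\<in>A. 2 * z i / (1 + z i))"
    using insert(1,2) by (rule sum.insert)
  show ?case unfolding p s F by (rule refl)
qed

lemma R_eq:
  fixes z :: "nat \<Rightarrow> complex"
  shows "R_poly m z = (\<Sum>S\<in>Pow {..<m}. (1 - 2 * of_nat (card S)) * (\<Prod>i\<in>S. z i))"
proof -
  have fin: "finite (Pow {..<m})" by simp
  have cs: "card ` Pow {..<m} \<subseteq> {..m}"
    by (auto simp: card_mono[of "{..<m}", simplified] )
  have "(\<Sum>S\<in>Pow {..<m}. (1 - 2 * of_nat (card S)) * (\<Prod>i\<in>S. z i))
     = (\<Sum>l\<in>{..m}. \<Sum>S\<in>{S. S \<in> Pow {..<m} \<and> card S = l}. (1 - 2 * of_nat (card S)) * (\<Prod>i\<in>S. z i :: complex))"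
    by (rule sum.group[OF fin _ cs, symmetric]) simp
  also have "\<dots> = (\<Sum>l\<in>{..m}. (1 - 2 * of_nat l) * (\<Sum>S\<in>{S. S \<subseteq> {..<m} \<and> card S = l}. \<Prod>i\<in>S. z i))"
    by (simp add: sum_distrib_left)
  also have "\<dots> = 1 + (\<Sum>l\<in>{1..m}. (1 - 2 * of_nat l) * (\<Sum>S\<in>{S. S \<subseteq> {..<m} \<and> card S = l}. \<Prod>i\<in>S. z i))"
  proof -
    have e: "{..m} = insert 0 {1..m}" by auto
    have z: "{S. S \<subseteq> {..<m} \<and> card S = 0} = {{}}"
    proof (intro equalityI subsetI)
      fix S assume "S \<in> {S. S \<subseteq> {..<m} \<and> card S = 0}"
      then have S: "S \<subseteq> {..<m}" "card S = 0" by auto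
      then have "finite S" using finite_subset by blast
      with S show "S \<in> {{}}" by simp
    qed simp
    show ?thesis unfolding e by (simp add: z)
  qed
  also have "\<dots> = R_poly m z"
    unfolding R_poly_def diff_conv_add_uminus sum_negf[symmetric]
    by (intro arg_cong2[where f="(+)"] refl sum.cong) (auto simp: of_nat_diff; simp add: algebra_simps)
  finally show ?thesis by simp
qed


definition Wt :: "nat \<Rightarrow> (nat \<Rightarrow> complex) \<Rightarrow> letter list \<Rightarrow> complex" where
  "Wt m z w = (\<Prod>i<m. z i ^ letter_count i w)"

lemma Wt_Nil: "Wt m z [] = 1"
  by (simp add: Wt_def letter_count_def)

lemma Wt_Cons:
  assumes "i < m"
  shows "Wt m z ((i,e)#w) = z i * Wt m z w"
proof -
  have "Wt m z ((i,e)#w) = (\<Prod>j<m. (if j = i then z j else 1) * z j ^ letter_count j w)"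
    unfolding Wt_def by (intro prod.cong) (auto simp: letter_count_def)
  also have "\<dots> = (\<Prod>j<m. if j = i then z j else 1) * Wt m z w"
    by (simp add: prod.distrib Wt_def)
  also have "(\<Prod>j<m. if j = i then z j else 1) = z i"
    using assms by (simp add: prod.delta)
  finally show ?thesis .
qed

lemma Wt_norm:
  assumes "\<forall>l\<in>set w. fst l < m" "\<forall>i<m. norm (z i) \<le> r" "0 \<le> r"
  shows "norm (Wt m z w) \<le> r ^ length w"
  using assms(1)
proof (induction w)
  case Nil
  then show ?case by (simp add: Wt_Nil)
next
  case (Cons a w)
  obtain i e where a: "a = (i, e)" by (cases a)
  have i: "i < m" using Cons.prems a by simp
  have "norm (Wt m z (a # w)) = norm (z i) * norm (Wt m z w)"
    using i a by (simp add: Wt_Cons norm_mult)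
  also have "\<dots> \<le> r * r ^ length w"
    using Cons i assms(2,3) by (intro mult_mono) auto
  finally show ?case by simp
qed

lemma geom_half: "(\<Sum>n\<le>N. (1/2::real) ^ n) \<le> 2"
proof -
  have "(\<Sum>n\<le>N. (1/2::real) ^ n) = (\<Sum>n<Suc N. (1/2::real) ^ n)"
    by (simp add: lessThan_Suc_atMost)
  also have "\<dots> = (1 - (1/2) ^ Suc N) / (1 - 1/2)"
    by (simp add: sum_gp_strict)
  also have "\<dots> \<le> 2" by simp
  finally show ?thesis .
qed

lemma Wt_summable:
  assumes "\<forall>i<m. norm (z i) \<le> r" "0 \<le> r" "2 * real m * r \<le> 1/2"
  shows "Wt m z summable_on reduced_words m"
proof -
  define L where "L = {..<m} \<times> (UNIV :: bool set)"
  have finL: "finite L" unfolding L_def by simp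
  have cardL: "card L = 2 * m" unfolding L_def by (simp add: card_cartesian_product)
  have "(\<lambda>w. norm (Wt m z w)) summable_on reduced_words m"
  proof (rule nonneg_bdd_above_summable_on)
    show "bdd_above (sum (\<lambda>w. norm (Wt m z w)) ` {F. F \<subseteq> reduced_words m \<and> finite F})"
    proof (rule bdd_aboveI2)
      fix F assume "F \<in> {F. F \<subseteq> reduced_words m \<and> finite F}"
      then have F: "F \<subseteq> reduced_words m" "finite F" by auto
      define N where "N = Max (insert 0 (length ` F))"
      define U where "U = {w. set w \<subseteq> L \<and> length w \<le> N}"
      have finU: "finite U" unfolding U_def using finL by (rule finite_lists_length_le)
      have FU: "F \<subseteq> U"
      proof
        fix w assume "w \<in> F"
        then have "w \<in> reduced_words m" "length w \<le> N"
          using F unfolding N_def by (auto intro: Max_ge)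
        then show "w \<in> U" unfolding U_def L_def reduced_words_def by auto
      qed
      have "(\<Sum>w\<in>F. norm (Wt m z w)) \<le> (\<Sum>w\<in>F. r ^ length w)"
      proof (rule sum_mono)
        fix w assume "w \<in> F"
        then have "\<forall>l\<in>set w. fst l < m" using F unfolding reduced_words_def by auto
        then show "norm (Wt m z w) \<le> r ^ length w" using Wt_norm assms(1,2) by blast
      qed
      also have "\<dots> \<le> (\<Sum>w\<in>U. r ^ length w)"
        using FU finU assms(2) by (intro sum_mono2) auto
      also have "\<dots> = (\<Sum>n\<le>N. \<Sum>w\<in>{w. w \<in> U \<and> length w = n}. r ^ length w)"
        by (rule sum.group[symmetric]) (use finU in \<open>auto simp: U_def\<close>)
      also have "\<dots> = (\<Sum>n\<le>N. (2 * real m * r) ^ n)"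
      proof (rule sum.cong)
        fix n assume n: "n \<in> {..N}"
        have e: "{w. w \<in> U \<and> length w = n} = {w. set w \<subseteq> L \<and> length w = n}"
          using n unfolding U_def by auto
        have "(\<Sum>w\<in>{w. w \<in> U \<and> length w = n}. r ^ length w) = (\<Sum>w\<in>{w. set w \<subseteq> L \<and> length w = n}. r ^ n)"
          unfolding e by simp
        also have "\<dots> = real (card L ^ n) * r ^ n"
          by (simp add: card_lists_length_eq[OF finL])
        finally show "(\<Sum>w\<in>{w. w \<in> U \<and> length w = n}. r ^ length w) = (2 * real m * r) ^ n"
          by (simp add: cardL power_mult_distrib)
      qed simp
      also have "\<dots> \<le> (\<Sum>n\<le>N. (1/2) ^ n)"
        using assms(2,3) by (intro sum_mono power_mono) auto
      also have "\<dots> \<le> 2" by (rule geom_half)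
      finally show "(\<Sum>w\<in>F. norm (Wt m z w)) \<le> 2" .
    qed
  qed simp
  then show ?thesis by (rule abs_summable_summable)
qed


lemma fr_Cons: "freely_reduced (l # w) \<longleftrightarrow> freely_reduced w \<and> (w = [] \<or> hd w \<noteq> inverse_letter l)"
  by (cases w) auto

lemma A_image:
  assumes "i < m"
  shows "{w \<in> reduced_words m. w \<noteq> [] \<and> hd w = (i,e)}
       = (#) (i,e) ` (reduced_words m - {w \<in> reduced_words m. w \<noteq> [] \<and> hd w = (i, \<not>e)})"
proof (intro equalityI subsetI)
  fix w assume w: "w \<in> {w \<in> reduced_words m. w \<noteq> [] \<and> hd w = (i,e)}"
  then obtain w' where w': "w = (i,e) # w'" by (cases w) auto
  have "w' \<in> reduced_words m - {w \<in> reduced_words m. w \<noteq> [] \<and> hd w = (i, \<not>e)}"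
    using w unfolding w' reduced_words_def by (auto simp: fr_Cons inverse_letter_def)
  then show "w \<in> (#) (i,e) ` (reduced_words m - {w \<in> reduced_words m. w \<noteq> [] \<and> hd w = (i, \<not>e)})"
    unfolding w' by blast
next
  fix w assume "w \<in> (#) (i,e) ` (reduced_words m - {w \<in> reduced_words m. w \<noteq> [] \<and> hd w = (i, \<not>e)})"
  then obtain w' where w': "w = (i,e) # w'"
    "w' \<in> reduced_words m - {w \<in> reduced_words m. w \<noteq> [] \<and> hd w = (i, \<not>e)}" by blast
  then show "w \<in> {w \<in> reduced_words m. w \<noteq> [] \<and> hd w = (i,e)}"
    using assms unfolding reduced_words_def by (auto simp: fr_Cons inverse_letter_def)
qed

lemma RW_decomp:
  "reduced_words m = insert [] (\<Union>p\<in>{..<m} \<times> (UNIV::bool set). {w \<in> reduced_words m. w \<noteq> [] \<and> hd w = p})"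
proof (intro equalityI subsetI)
  fix w assume w: "w \<in> reduced_words m"
  show "w \<in> insert [] (\<Union>p\<in>{..<m} \<times> (UNIV::bool set). {w \<in> reduced_words m. w \<noteq> [] \<and> hd w = p})"
  proof (cases w)
    case (Cons a w')
    then have "fst a < m" using w unfolding reduced_words_def by auto
    then show ?thesis using w Cons by (cases a) auto
  qed simp
next
  fix w assume "w \<in> insert [] (\<Union>p\<in>{..<m} \<times> (UNIV::bool set). {w \<in> reduced_words m. w \<noteq> [] \<and> hd w = p})"
  then show "w \<in> reduced_words m" by (auto simp: reduced_words_def)
qed

lemma main_identity:
  assumes summ: "Wt m z summable_on reduced_words m"
  shows "infsum (Wt m z) (reduced_words m) * (1 - (\<Sum>i<m. 2 * z i / (1 + z i))) = 1 \<or> (\<exists>i<m. 1 + z i = 0)"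
proof (cases "\<exists>i<m. 1 + z i = 0")
  case True then show ?thesis by blast
next
  case False
  then have nz: "\<And>i. i < m \<Longrightarrow> 1 + z i \<noteq> 0" by blast
  define RW where "RW = reduced_words m"
  define W where "W = Wt m z"
  define A where "A p = {w \<in> RW. w \<noteq> [] \<and> hd w = p}" for p
  define D where "D = infsum W RW"
  define Dp where "Dp p = infsum W (A p)" for p
  have sRW: "W summable_on RW" using summ unfolding W_def RW_def .
  have AS: "A p \<subseteq> RW" for p unfolding A_def by auto
  have sA: "W summable_on A p" for p using summable_on_subset_banach[OF sRW AS] .
  have rec: "Dp (i,e) = z i * (D - Dp (i, \<not>e))" if i: "i < m" for i e
  proof -
    have AI: "A (i,e) = (#) (i,e) ` (RW - A (i, \<not>e))"
      unfolding A_def RW_def by (rule A_image[OF i])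
    have "Dp (i,e) = infsum W ((#) (i,e) ` (RW - A (i, \<not>e)))"
      unfolding Dp_def by (rule arg_cong[where f="infsum W"]) (rule AI)
    also have "\<dots> = infsum (W \<circ> (#) (i,e)) (RW - A (i, \<not>e))"
      by (rule infsum_reindex) simp
    also have "\<dots> = infsum (\<lambda>w. z i * W w) (RW - A (i, \<not>e))"
      by (rule infsum_cong) (simp add: W_def Wt_Cons[OF i])
    also have "\<dots> = z i * infsum W (RW - A (i, \<not>e))"
      by (rule infsum_cmult_right) (rule summable_on_subset_banach[OF sRW], auto)
    also have "infsum W (RW - A (i, \<not>e)) = D - Dp (i, \<not>e)"
      unfolding D_def Dp_def by (rule infsum_Diff[OF sRW sA AS])
    finally show ?thesis .
  qed
  have T: "Dp (i,True) + Dp (i,False) = 2 * z i * D / (1 + z i)" if i: "i < m" for i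
  proof -
    have r1: "Dp (i,True) = z i * (D - Dp (i,False))" using rec[OF i, of True] by simp
    have r2: "Dp (i,False) = z i * (D - Dp (i,True))" using rec[OF i, of False] by simp
    have "(1 + z i) * (Dp (i,True) + Dp (i,False)) = 2 * z i * D"
      using r1 r2 by algebra
    then show ?thesis using nz[OF i] by (simp add: field_simps)
  qed
  have dec: "RW = insert [] (\<Union>p\<in>{..<m} \<times> (UNIV::bool set). A p)"
    unfolding RW_def A_def by (rule RW_decomp)
  have notin: "[] \<notin> (\<Union>p\<in>{..<m} \<times> (UNIV::bool set). A p)" unfolding A_def by auto
  have sU: "W summable_on (\<Union>p\<in>{..<m} \<times> (UNIV::bool set). A p)"
    by (rule summable_on_subset_banach[OF sRW]) (auto simp: A_def)
  have "D = W [] + infsum W (\<Union>p\<in>{..<m} \<times> (UNIV::bool set). A p)"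
    unfolding D_def by (subst dec) (rule infsum_insert[OF sU notin])
  also have "infsum W (\<Union>p\<in>{..<m} \<times> (UNIV::bool set). A p) = (\<Sum>p\<in>{..<m} \<times> (UNIV::bool set). Dp p)"
  proof -
    have sA': "W summable_on {w \<in> RW. w \<noteq> [] \<and> hd w = p}" for p using sA[of p] unfolding A_def .
    show ?thesis unfolding Dp_def by (rule sum_infsum[symmetric]) (auto simp: sA' A_def)
  qed
  also have "\<dots> = (\<Sum>i<m. \<Sum>e\<in>(UNIV::bool set). Dp (i,e))"
    by (simp add: sum.cartesian_product)
  also have "\<dots> = (\<Sum>i<m. 2 * z i * D / (1 + z i))"
  proof (intro sum.cong refl)
    fix i assume "i \<in> {..<m}"
    then have i: "i < m" by simp
    have "(\<Sum>e\<in>(UNIV::bool set). Dp (i,e)) = Dp (i,True) + Dp (i,False)"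
      by (simp add: UNIV_bool add.commute)
    then show "(\<Sum>e\<in>(UNIV::bool set). Dp (i,e)) = 2 * z i * D / (1 + z i)"
      using T[OF i] by simp
  qed
  finally have D1: "D = 1 + (\<Sum>i<m. 2 * z i * D / (1 + z i))"
    by (simp add: W_def Wt_Nil)
  have S: "(\<Sum>i<m. 2 * z i * D / (1 + z i)) = D * (\<Sum>i<m. 2 * z i / (1 + z i))"
    by (simp add: sum_distrib_left mult_ac)
  have "D = 1 + D * (\<Sum>i<m. 2 * z i / (1 + z i))" using D1 unfolding S .
  then have "D * (1 - (\<Sum>i<m. 2 * z i / (1 + z i))) = 1"
    by algebra
  then show ?thesis unfolding D_def W_def RW_def by blast
qed


theorem proposition2:
  fixes m :: nat
  assumes "m \<ge> 2"
  shows "\<exists>r>0. \<forall>z :: nat \<Rightarrow> complex. (\<forall>i<m. norm (z i) < r) \<longrightarrow>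
           ((\<lambda>w. \<Prod>i<m. z i ^ letter_count i w) has_sum
              ((\<Prod>i<m. 1 + z i) / R_poly m z)) (reduced_words m)"
proof (intro exI[of _ "1 / (4 * real m)"] conjI allI impI)
  show "1 / (4 * real m) > 0" using assms by simp
  fix z :: "nat \<Rightarrow> complex"
  assume z: "\<forall>i<m. norm (z i) < 1 / (4 * real m)"
  define r where "r = 1 / (4 * real m)"
  have r1: "r < 1" using assms unfolding r_def by simp
  have zr: "\<forall>i<m. norm (z i) \<le> r" using z unfolding r_def by (simp add: less_imp_le)
  have r0: "0 \<le> r" unfolding r_def by simp
  have r2: "2 * real m * r \<le> 1/2" using assms unfolding r_def by simp
  have summ: "Wt m z summable_on reduced_words m" by (rule Wt_summable[OF zr r0 r2])
  have nz: "1 + z i \<noteq> 0" if "i < m" for i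
  proof
    assume "1 + z i = 0"
    then have "z i = -1" by (simp add: add_eq_0_iff)
    then have "norm (z i) = 1" by simp
    with zr that r1 show False by force
  qed
  define s where "s = 1 - (\<Sum>i<m. 2 * z i / (1 + z i))"
  define P where "P = (\<Prod>i<m. 1 + z i)"
  have Ds: "infsum (Wt m z) (reduced_words m) * s = 1"
    using main_identity[OF summ] nz unfolding s_def by blast
  have P0: "P \<noteq> 0" unfolding P_def using nz by simp
  have R: "R_poly m z = P * s"
    unfolding R_eq P_def s_def by (rule Q_eq) (use nz in auto)
  have val: "infsum (Wt m z) (reduced_words m) = P / R_poly m z"
  proof -
    have s0: "s \<noteq> 0" using Ds by auto
    have "infsum (Wt m z) (reduced_words m) = 1 / s" using Ds s0 by (simp add: eq_divide_eq)
    then show ?thesis using P0 s0 unfolding R by simp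
  qed
  have eq: "(\<lambda>w. \<Prod>i<m. z i ^ letter_count i w) = Wt m z"
    by (rule ext) (simp add: Wt_def)
  show "((\<lambda>w. \<Prod>i<m. z i ^ letter_count i w) has_sum ((\<Prod>i<m. 1 + z i) / R_poly m z)) (reduced_words m)"
    unfolding eq P_def[symmetric] val[symmetric] using summ by (rule has_sum_infsum)
qed

end
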